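(* For $n=3$, $DCell_1$ is Hamiltonian-connected. The same holds for every Generalized $DCell_1$ with $n=3$.
   Context: $DCell_0$ is the complete graph $K_n$ ($t_0=n$ vertices). $DCell_1$ consists of $t_0+1$ vertex-disjoint copies $D_0^0,\dots,D_0^{t_0}$ of $K_n$, with vertices of each copy numbered $0,\dots,n-1$, and for each pair $a<b$ the vertex numbered $b-1$ of $D_0^a$ is joined to the vertex numbered $a$ of $D_0^b$. A Generalized $DCell_1$ uses instead any set of edges between the copies such that each pair of distinct copies is joined by exactly one edge and each vertex is incident with exactly one such edge. A graph is Hamiltonian-connected if every two distinct vertices are the endpoints of a Hamiltonian path. *)

theory Defs
  imports Main
begin

type_synonym vert = "nat \<times> nat"

text \<open>Vertex set of a (generalized) DCell_1 built from n+1 copies of K_n: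
  vertex (a, i) is the vertex numbered i of copy D_0^a, with a in {0..n}, i in {0..<n}.\<close>
definition dverts :: "nat \<Rightarrow> vert set" where
  "dverts n = {0..n} \<times> {0..<n}"

definition inner_edge :: "vert \<Rightarrow> vert \<Rightarrow> bool" where
  "inner_edge u v \<longleftrightarrow> fst u = fst v \<and> snd u \<noteq> snd v"

definition dcell_link :: "nat \<Rightarrow> vert \<Rightarrow> vert \<Rightarrow> bool" where
  "dcell_link n u v \<longleftrightarrow>
     (fst u < fst v \<and> fst v \<le> n \<and> snd u = fst v - 1 \<and> snd v = fst u) \<or>
     (fst v < fst u \<and> fst u \<le> n \<and> snd v = fst u - 1 \<and> snd u = fst v)"

definition dgraph :: "nat \<Rightarrow> (vert \<Rightarrow> vert \<Rightarrow> bool) \<Rightarrow> vert \<Rightarrow> vert \<Rightarrow> bool" where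
  "dgraph n M u v \<longleftrightarrow> u \<in> dverts n \<and> v \<in> dverts n \<and> (inner_edge u v \<or> M u v)"

definition DCell1 :: "nat \<Rightarrow> vert \<Rightarrow> vert \<Rightarrow> bool" where
  "DCell1 n = dgraph n (dcell_link n)"

definition gen_links :: "nat \<Rightarrow> (vert \<Rightarrow> vert \<Rightarrow> bool) \<Rightarrow> bool" where
  "gen_links n M \<longleftrightarrow>
     (\<forall>u v. M u v \<longrightarrow> M v u) \<and>
     (\<forall>u v. M u v \<longrightarrow> u \<in> dverts n \<and> v \<in> dverts n \<and> fst u \<noteq> fst v) \<and>
     (\<forall>a b. a \<le> n \<longrightarrow> b \<le> n \<longrightarrow> a \<noteq> b \<longrightarrow>
        (\<exists>!e. M (fst e) (snd e) \<and> fst (fst e) = a \<and> fst (snd e) = b)) \<and>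
     (\<forall>u \<in> dverts n. \<exists>!v. M u v)"

definition GenDCell1 :: "nat \<Rightarrow> (vert \<Rightarrow> vert \<Rightarrow> bool) \<Rightarrow> vert \<Rightarrow> vert \<Rightarrow> bool" where
  "GenDCell1 n M = dgraph n M"

definition ham_path :: "'a set \<Rightarrow> ('a \<Rightarrow> 'a \<Rightarrow> bool) \<Rightarrow> 'a \<Rightarrow> 'a \<Rightarrow> 'a list \<Rightarrow> bool" where
  "ham_path V E x y p \<longleftrightarrow> distinct p \<and> set p = V \<and> p \<noteq> [] \<and> hd p = x \<and> last p = y \<and>
     (\<forall>i. Suc i < length p \<longrightarrow> E (p ! i) (p ! Suc i))"

definition hamiltonian_connected :: "'a set \<Rightarrow> ('a \<Rightarrow> 'a \<Rightarrow> bool) \<Rightarrow> bool" where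
  "hamiltonian_connected V E \<longleftrightarrow>
     (\<forall>x\<in>V. \<forall>y\<in>V. x \<noteq> y \<longrightarrow> (\<exists>p. ham_path V E x y p))"

end

theory Submission
  imports Defs
begin

fun chain :: "('a \<Rightarrow> 'a \<Rightarrow> bool) \<Rightarrow> 'a list \<Rightarrow> bool" where
  "chain E [] = True"
| "chain E [x] = True"
| "chain E (a # b # xs) = (E a b \<and> chain E (b # xs))"

lemma chain_nth: "chain E p \<Longrightarrow> Suc i < length p \<Longrightarrow> E (p ! i) (p ! Suc i)"
proof (induction E p arbitrary: i rule: chain.induct)
  case (3 E a b xs)
  then show ?case by (cases i) auto
qed auto

definition dlist :: "vert list" where
  "dlist = [(0,0),(0,1),(0,2),(1,0),(1,1),(1,2),(2,0),(2,1),(2,2),(3,0),(3,1),(3,2)]"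

lemma set_dlist: "set dlist = dverts 3"
  proof -
  have a: "{0..3::nat} = {0,1,2,3}" by auto
  have b: "{0..<3::nat} = {0,1,2}" by auto
  show ?thesis unfolding dlist_def dverts_def a b by auto
qed

definition dc3 :: "vert \<Rightarrow> vert \<Rightarrow> bool" where
  "dc3 u v \<longleftrightarrow> (fst u = fst v \<and> snd u \<noteq> snd v) \<or>
     (fst u < fst v \<and> snd u = fst v - 1 \<and> snd v = fst u) \<or>
     (fst v < fst u \<and> snd v = fst u - 1 \<and> snd u = fst v)"

definition okp :: "vert \<Rightarrow> vert \<Rightarrow> vert list \<Rightarrow> bool" where
  "okp x y p \<longleftrightarrow> distinct p \<and> list_all (\<lambda>v. v \<in> set p) dlist \<and> list_all (\<lambda>v. v \<in> set dlist) p
     \<and> p \<noteq> [] \<and> hd p = x \<and> last p = y \<and> chain dc3 p"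

definition ptab :: "(vert \<times> vert \<times> vert list) list" where
  "ptab = [((0,0),(0,1),[(0,0),(0,2),(3,0),(3,2),(3,1),(1,2),(1,0),(1,1),(2,1),(2,2),(2,0),(0,1)]),
    ((0,0),(0,2),[(0,0),(0,1),(2,0),(2,2),(2,1),(1,1),(1,0),(1,2),(3,1),(3,2),(3,0),(0,2)]),
    ((0,0),(1,0),[(0,0),(0,1),(0,2),(3,0),(3,1),(3,2),(2,2),(2,0),(2,1),(1,1),(1,2),(1,0)]),
    ((0,0),(1,1),[(0,0),(0,2),(0,1),(2,0),(2,1),(2,2),(3,2),(3,0),(3,1),(1,2),(1,0),(1,1)]),
    ((0,0),(1,2),[(0,0),(0,1),(0,2),(3,0),(3,1),(3,2),(2,2),(2,0),(2,1),(1,1),(1,0),(1,2)]),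
    ((0,0),(2,0),[(0,0),(0,1),(0,2),(3,0),(3,2),(3,1),(1,2),(1,0),(1,1),(2,1),(2,2),(2,0)]),
    ((0,0),(2,1),[(0,0),(0,2),(0,1),(2,0),(2,2),(3,2),(3,0),(3,1),(1,2),(1,0),(1,1),(2,1)]),
    ((0,0),(2,2),[(0,0),(0,1),(0,2),(3,0),(3,2),(3,1),(1,2),(1,0),(1,1),(2,1),(2,0),(2,2)]),
    ((0,0),(3,0),[(0,0),(0,2),(0,1),(2,0),(2,2),(2,1),(1,1),(1,0),(1,2),(3,1),(3,2),(3,0)]),
    ((0,0),(3,1),[(0,0),(0,1),(0,2),(3,0),(3,2),(2,2),(2,0),(2,1),(1,1),(1,0),(1,2),(3,1)]),
    ((0,0),(3,2),[(0,0),(0,1),(0,2),(3,0),(3,1),(1,2),(1,0),(1,1),(2,1),(2,0),(2,2),(3,2)]),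
    ((0,1),(0,0),[(0,1),(0,2),(3,0),(3,1),(3,2),(2,2),(2,0),(2,1),(1,1),(1,2),(1,0),(0,0)]),
    ((0,1),(0,2),[(0,1),(0,0),(1,0),(1,2),(1,1),(2,1),(2,0),(2,2),(3,2),(3,1),(3,0),(0,2)]),
    ((0,1),(1,0),[(0,1),(0,0),(0,2),(3,0),(3,1),(3,2),(2,2),(2,0),(2,1),(1,1),(1,2),(1,0)]),
    ((0,1),(1,1),[(0,1),(0,2),(0,0),(1,0),(1,2),(3,1),(3,0),(3,2),(2,2),(2,0),(2,1),(1,1)]),
    ((0,1),(1,2),[(0,1),(0,0),(0,2),(3,0),(3,1),(3,2),(2,2),(2,0),(2,1),(1,1),(1,0),(1,2)]),
    ((0,1),(2,0),[(0,1),(0,0),(0,2),(3,0),(3,2),(3,1),(1,2),(1,0),(1,1),(2,1),(2,2),(2,0)]),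
    ((0,1),(2,1),[(0,1),(0,2),(0,0),(1,0),(1,1),(1,2),(3,1),(3,0),(3,2),(2,2),(2,0),(2,1)]),
    ((0,1),(2,2),[(0,1),(0,0),(0,2),(3,0),(3,2),(3,1),(1,2),(1,0),(1,1),(2,1),(2,0),(2,2)]),
    ((0,1),(3,0),[(0,1),(0,2),(0,0),(1,0),(1,2),(1,1),(2,1),(2,0),(2,2),(3,2),(3,1),(3,0)]),
    ((0,1),(3,1),[(0,1),(0,0),(0,2),(3,0),(3,2),(2,2),(2,0),(2,1),(1,1),(1,0),(1,2),(3,1)]),
    ((0,1),(3,2),[(0,1),(0,0),(0,2),(3,0),(3,1),(1,2),(1,0),(1,1),(2,1),(2,0),(2,2),(3,2)]),
    ((0,2),(0,0),[(0,2),(0,1),(2,0),(2,1),(2,2),(3,2),(3,0),(3,1),(1,2),(1,1),(1,0),(0,0)]),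
    ((0,2),(0,1),[(0,2),(0,0),(1,0),(1,1),(1,2),(3,1),(3,0),(3,2),(2,2),(2,1),(2,0),(0,1)]),
    ((0,2),(1,0),[(0,2),(0,0),(0,1),(2,0),(2,1),(2,2),(3,2),(3,0),(3,1),(1,2),(1,1),(1,0)]),
    ((0,2),(1,1),[(0,2),(0,0),(0,1),(2,0),(2,1),(2,2),(3,2),(3,0),(3,1),(1,2),(1,0),(1,1)]),
    ((0,2),(1,2),[(0,2),(0,1),(0,0),(1,0),(1,1),(2,1),(2,0),(2,2),(3,2),(3,0),(3,1),(1,2)]),
    ((0,2),(2,0),[(0,2),(0,1),(0,0),(1,0),(1,1),(1,2),(3,1),(3,0),(3,2),(2,2),(2,1),(2,0)]),
    ((0,2),(2,1),[(0,2),(0,0),(0,1),(2,0),(2,2),(3,2),(3,0),(3,1),(1,2),(1,0),(1,1),(2,1)]),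
    ((0,2),(2,2),[(0,2),(0,0),(0,1),(2,0),(2,1),(1,1),(1,0),(1,2),(3,1),(3,0),(3,2),(2,2)]),
    ((0,2),(3,0),[(0,2),(0,0),(0,1),(2,0),(2,2),(2,1),(1,1),(1,0),(1,2),(3,1),(3,2),(3,0)]),
    ((0,2),(3,1),[(0,2),(0,1),(0,0),(1,0),(1,2),(1,1),(2,1),(2,0),(2,2),(3,2),(3,0),(3,1)]),
    ((0,2),(3,2),[(0,2),(0,0),(0,1),(2,0),(2,2),(2,1),(1,1),(1,0),(1,2),(3,1),(3,0),(3,2)]),
    ((1,0),(0,0),[(1,0),(1,1),(1,2),(3,1),(3,0),(3,2),(2,2),(2,1),(2,0),(0,1),(0,2),(0,0)]),
    ((1,0),(0,1),[(1,0),(0,0),(0,2),(3,0),(3,2),(3,1),(1,2),(1,1),(2,1),(2,2),(2,0),(0,1)]),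
    ((1,0),(0,2),[(1,0),(0,0),(0,1),(2,0),(2,2),(2,1),(1,1),(1,2),(3,1),(3,2),(3,0),(0,2)]),
    ((1,0),(1,1),[(1,0),(0,0),(0,2),(0,1),(2,0),(2,1),(2,2),(3,2),(3,0),(3,1),(1,2),(1,1)]),
    ((1,0),(1,2),[(1,0),(0,0),(0,1),(0,2),(3,0),(3,1),(3,2),(2,2),(2,0),(2,1),(1,1),(1,2)]),
    ((1,0),(2,0),[(1,0),(0,0),(0,1),(0,2),(3,0),(3,2),(3,1),(1,2),(1,1),(2,1),(2,2),(2,0)]),
    ((1,0),(2,1),[(1,0),(0,0),(0,2),(0,1),(2,0),(2,2),(3,2),(3,0),(3,1),(1,2),(1,1),(2,1)]),
    ((1,0),(2,2),[(1,0),(0,0),(0,1),(0,2),(3,0),(3,2),(3,1),(1,2),(1,1),(2,1),(2,0),(2,2)]),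
    ((1,0),(3,0),[(1,0),(0,0),(0,2),(0,1),(2,0),(2,2),(2,1),(1,1),(1,2),(3,1),(3,2),(3,0)]),
    ((1,0),(3,1),[(1,0),(0,0),(0,1),(0,2),(3,0),(3,2),(2,2),(2,0),(2,1),(1,1),(1,2),(3,1)]),
    ((1,0),(3,2),[(1,0),(0,0),(0,1),(0,2),(3,0),(3,1),(1,2),(1,1),(2,1),(2,0),(2,2),(3,2)]),
    ((1,1),(0,0),[(1,1),(1,0),(1,2),(3,1),(3,0),(3,2),(2,2),(2,1),(2,0),(0,1),(0,2),(0,0)]),
    ((1,1),(0,1),[(1,1),(1,2),(1,0),(0,0),(0,2),(3,0),(3,1),(3,2),(2,2),(2,1),(2,0),(0,1)]),
    ((1,1),(0,2),[(1,1),(1,0),(1,2),(3,1),(3,0),(3,2),(2,2),(2,1),(2,0),(0,1),(0,0),(0,2)]),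
    ((1,1),(1,0),[(1,1),(1,2),(3,1),(3,0),(3,2),(2,2),(2,1),(2,0),(0,1),(0,2),(0,0),(1,0)]),
    ((1,1),(1,2),[(1,1),(1,0),(0,0),(0,2),(0,1),(2,0),(2,1),(2,2),(3,2),(3,0),(3,1),(1,2)]),
    ((1,1),(2,0),[(1,1),(1,2),(1,0),(0,0),(0,1),(0,2),(3,0),(3,1),(3,2),(2,2),(2,1),(2,0)]),
    ((1,1),(2,1),[(1,1),(1,0),(1,2),(3,1),(3,2),(3,0),(0,2),(0,0),(0,1),(2,0),(2,2),(2,1)]),
    ((1,1),(2,2),[(1,1),(1,0),(1,2),(3,1),(3,2),(3,0),(0,2),(0,0),(0,1),(2,0),(2,1),(2,2)]),
    ((1,1),(3,0),[(1,1),(1,0),(1,2),(3,1),(3,2),(2,2),(2,1),(2,0),(0,1),(0,0),(0,2),(3,0)]),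
    ((1,1),(3,1),[(1,1),(1,2),(1,0),(0,0),(0,2),(0,1),(2,0),(2,1),(2,2),(3,2),(3,0),(3,1)]),
    ((1,1),(3,2),[(1,1),(1,0),(1,2),(3,1),(3,0),(0,2),(0,0),(0,1),(2,0),(2,1),(2,2),(3,2)]),
    ((1,2),(0,0),[(1,2),(1,0),(1,1),(2,1),(2,0),(2,2),(3,2),(3,1),(3,0),(0,2),(0,1),(0,0)]),
    ((1,2),(0,1),[(1,2),(1,0),(1,1),(2,1),(2,0),(2,2),(3,2),(3,1),(3,0),(0,2),(0,0),(0,1)]),
    ((1,2),(0,2),[(1,2),(1,1),(1,0),(0,0),(0,1),(2,0),(2,1),(2,2),(3,2),(3,1),(3,0),(0,2)]),
    ((1,2),(1,0),[(1,2),(1,1),(2,1),(2,0),(2,2),(3,2),(3,1),(3,0),(0,2),(0,1),(0,0),(1,0)]),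
    ((1,2),(1,1),[(1,2),(1,0),(0,0),(0,1),(0,2),(3,0),(3,1),(3,2),(2,2),(2,0),(2,1),(1,1)]),
    ((1,2),(2,0),[(1,2),(1,0),(1,1),(2,1),(2,2),(3,2),(3,1),(3,0),(0,2),(0,0),(0,1),(2,0)]),
    ((1,2),(2,1),[(1,2),(1,1),(1,0),(0,0),(0,1),(0,2),(3,0),(3,1),(3,2),(2,2),(2,0),(2,1)]),
    ((1,2),(2,2),[(1,2),(1,0),(1,1),(2,1),(2,0),(0,1),(0,0),(0,2),(3,0),(3,1),(3,2),(2,2)]),
    ((1,2),(3,0),[(1,2),(1,1),(1,0),(0,0),(0,2),(0,1),(2,0),(2,1),(2,2),(3,2),(3,1),(3,0)]),
    ((1,2),(3,1),[(1,2),(1,0),(1,1),(2,1),(2,2),(2,0),(0,1),(0,0),(0,2),(3,0),(3,2),(3,1)]),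
    ((1,2),(3,2),[(1,2),(1,0),(1,1),(2,1),(2,2),(2,0),(0,1),(0,0),(0,2),(3,0),(3,1),(3,2)]),
    ((2,0),(0,0),[(2,0),(0,1),(0,2),(3,0),(3,1),(3,2),(2,2),(2,1),(1,1),(1,2),(1,0),(0,0)]),
    ((2,0),(0,1),[(2,0),(2,1),(2,2),(3,2),(3,0),(3,1),(1,2),(1,1),(1,0),(0,0),(0,2),(0,1)]),
    ((2,0),(0,2),[(2,0),(0,1),(0,0),(1,0),(1,2),(1,1),(2,1),(2,2),(3,2),(3,1),(3,0),(0,2)]),
    ((2,0),(1,0),[(2,0),(0,1),(0,0),(0,2),(3,0),(3,1),(3,2),(2,2),(2,1),(1,1),(1,2),(1,0)]),
    ((2,0),(1,1),[(2,0),(0,1),(0,2),(0,0),(1,0),(1,2),(3,1),(3,0),(3,2),(2,2),(2,1),(1,1)]),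
    ((2,0),(1,2),[(2,0),(0,1),(0,0),(0,2),(3,0),(3,1),(3,2),(2,2),(2,1),(1,1),(1,0),(1,2)]),
    ((2,0),(2,1),[(2,0),(0,1),(0,2),(0,0),(1,0),(1,1),(1,2),(3,1),(3,0),(3,2),(2,2),(2,1)]),
    ((2,0),(2,2),[(2,0),(0,1),(0,0),(0,2),(3,0),(3,2),(3,1),(1,2),(1,0),(1,1),(2,1),(2,2)]),
    ((2,0),(3,0),[(2,0),(0,1),(0,2),(0,0),(1,0),(1,2),(1,1),(2,1),(2,2),(3,2),(3,1),(3,0)]),
    ((2,0),(3,1),[(2,0),(0,1),(0,0),(0,2),(3,0),(3,2),(2,2),(2,1),(1,1),(1,0),(1,2),(3,1)]),
    ((2,0),(3,2),[(2,0),(0,1),(0,0),(0,2),(3,0),(3,1),(1,2),(1,0),(1,1),(2,1),(2,2),(3,2)]),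
    ((2,1),(0,0),[(2,1),(1,1),(1,0),(1,2),(3,1),(3,0),(3,2),(2,2),(2,0),(0,1),(0,2),(0,0)]),
    ((2,1),(0,1),[(2,1),(1,1),(1,2),(1,0),(0,0),(0,2),(3,0),(3,1),(3,2),(2,2),(2,0),(0,1)]),
    ((2,1),(0,2),[(2,1),(1,1),(1,0),(1,2),(3,1),(3,0),(3,2),(2,2),(2,0),(0,1),(0,0),(0,2)]),
    ((2,1),(1,0),[(2,1),(1,1),(1,2),(3,1),(3,0),(3,2),(2,2),(2,0),(0,1),(0,2),(0,0),(1,0)]),
    ((2,1),(1,1),[(2,1),(2,0),(2,2),(3,2),(3,1),(3,0),(0,2),(0,1),(0,0),(1,0),(1,2),(1,1)]),
    ((2,1),(1,2),[(2,1),(1,1),(1,0),(0,0),(0,2),(0,1),(2,0),(2,2),(3,2),(3,0),(3,1),(1,2)]),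
    ((2,1),(2,0),[(2,1),(1,1),(1,2),(1,0),(0,0),(0,1),(0,2),(3,0),(3,1),(3,2),(2,2),(2,0)]),
    ((2,1),(2,2),[(2,1),(1,1),(1,0),(1,2),(3,1),(3,2),(3,0),(0,2),(0,0),(0,1),(2,0),(2,2)]),
    ((2,1),(3,0),[(2,1),(1,1),(1,0),(1,2),(3,1),(3,2),(2,2),(2,0),(0,1),(0,0),(0,2),(3,0)]),
    ((2,1),(3,1),[(2,1),(1,1),(1,2),(1,0),(0,0),(0,2),(0,1),(2,0),(2,2),(3,2),(3,0),(3,1)]),
    ((2,1),(3,2),[(2,1),(1,1),(1,0),(1,2),(3,1),(3,0),(0,2),(0,0),(0,1),(2,0),(2,2),(3,2)]),
    ((2,2),(0,0),[(2,2),(2,0),(2,1),(1,1),(1,0),(1,2),(3,1),(3,2),(3,0),(0,2),(0,1),(0,0)]),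
    ((2,2),(0,1),[(2,2),(2,0),(2,1),(1,1),(1,0),(1,2),(3,1),(3,2),(3,0),(0,2),(0,0),(0,1)]),
    ((2,2),(0,2),[(2,2),(2,1),(2,0),(0,1),(0,0),(1,0),(1,1),(1,2),(3,1),(3,2),(3,0),(0,2)]),
    ((2,2),(1,0),[(2,2),(2,0),(2,1),(1,1),(1,2),(3,1),(3,2),(3,0),(0,2),(0,1),(0,0),(1,0)]),
    ((2,2),(1,1),[(2,2),(2,1),(2,0),(0,1),(0,0),(0,2),(3,0),(3,2),(3,1),(1,2),(1,0),(1,1)]),
    ((2,2),(1,2),[(2,2),(2,0),(2,1),(1,1),(1,0),(0,0),(0,1),(0,2),(3,0),(3,2),(3,1),(1,2)]),
    ((2,2),(2,0),[(2,2),(2,1),(1,1),(1,0),(1,2),(3,1),(3,2),(3,0),(0,2),(0,0),(0,1),(2,0)]),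
    ((2,2),(2,1),[(2,2),(2,0),(0,1),(0,0),(0,2),(3,0),(3,2),(3,1),(1,2),(1,0),(1,1),(2,1)]),
    ((2,2),(3,0),[(2,2),(2,1),(2,0),(0,1),(0,2),(0,0),(1,0),(1,1),(1,2),(3,1),(3,2),(3,0)]),
    ((2,2),(3,1),[(2,2),(2,0),(2,1),(1,1),(1,2),(1,0),(0,0),(0,1),(0,2),(3,0),(3,2),(3,1)]),
    ((2,2),(3,2),[(2,2),(2,0),(2,1),(1,1),(1,2),(1,0),(0,0),(0,1),(0,2),(3,0),(3,1),(3,2)]),
    ((3,0),(0,0),[(3,0),(0,2),(0,1),(2,0),(2,1),(2,2),(3,2),(3,1),(1,2),(1,1),(1,0),(0,0)]),
    ((3,0),(0,1),[(3,0),(0,2),(0,0),(1,0),(1,1),(1,2),(3,1),(3,2),(2,2),(2,1),(2,0),(0,1)]),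
    ((3,0),(0,2),[(3,0),(3,1),(3,2),(2,2),(2,0),(2,1),(1,1),(1,2),(1,0),(0,0),(0,1),(0,2)]),
    ((3,0),(1,0),[(3,0),(0,2),(0,0),(0,1),(2,0),(2,1),(2,2),(3,2),(3,1),(1,2),(1,1),(1,0)]),
    ((3,0),(1,1),[(3,0),(0,2),(0,0),(0,1),(2,0),(2,1),(2,2),(3,2),(3,1),(1,2),(1,0),(1,1)]),
    ((3,0),(1,2),[(3,0),(0,2),(0,1),(0,0),(1,0),(1,1),(2,1),(2,0),(2,2),(3,2),(3,1),(1,2)]),
    ((3,0),(2,0),[(3,0),(0,2),(0,1),(0,0),(1,0),(1,1),(1,2),(3,1),(3,2),(2,2),(2,1),(2,0)]),
    ((3,0),(2,1),[(3,0),(0,2),(0,0),(0,1),(2,0),(2,2),(3,2),(3,1),(1,2),(1,0),(1,1),(2,1)]),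
    ((3,0),(2,2),[(3,0),(0,2),(0,0),(0,1),(2,0),(2,1),(1,1),(1,0),(1,2),(3,1),(3,2),(2,2)]),
    ((3,0),(3,1),[(3,0),(0,2),(0,1),(0,0),(1,0),(1,2),(1,1),(2,1),(2,0),(2,2),(3,2),(3,1)]),
    ((3,0),(3,2),[(3,0),(0,2),(0,0),(0,1),(2,0),(2,2),(2,1),(1,1),(1,0),(1,2),(3,1),(3,2)]),
    ((3,1),(0,0),[(3,1),(1,2),(1,0),(1,1),(2,1),(2,0),(2,2),(3,2),(3,0),(0,2),(0,1),(0,0)]),
    ((3,1),(0,1),[(3,1),(1,2),(1,0),(1,1),(2,1),(2,0),(2,2),(3,2),(3,0),(0,2),(0,0),(0,1)]),
    ((3,1),(0,2),[(3,1),(1,2),(1,1),(1,0),(0,0),(0,1),(2,0),(2,1),(2,2),(3,2),(3,0),(0,2)]),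
    ((3,1),(1,0),[(3,1),(1,2),(1,1),(2,1),(2,0),(2,2),(3,2),(3,0),(0,2),(0,1),(0,0),(1,0)]),
    ((3,1),(1,1),[(3,1),(1,2),(1,0),(0,0),(0,1),(0,2),(3,0),(3,2),(2,2),(2,0),(2,1),(1,1)]),
    ((3,1),(1,2),[(3,1),(3,0),(3,2),(2,2),(2,1),(2,0),(0,1),(0,2),(0,0),(1,0),(1,1),(1,2)]),
    ((3,1),(2,0),[(3,1),(1,2),(1,0),(1,1),(2,1),(2,2),(3,2),(3,0),(0,2),(0,0),(0,1),(2,0)]),
    ((3,1),(2,1),[(3,1),(1,2),(1,1),(1,0),(0,0),(0,1),(0,2),(3,0),(3,2),(2,2),(2,0),(2,1)]),
    ((3,1),(2,2),[(3,1),(1,2),(1,0),(1,1),(2,1),(2,0),(0,1),(0,0),(0,2),(3,0),(3,2),(2,2)]),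
    ((3,1),(3,0),[(3,1),(1,2),(1,1),(1,0),(0,0),(0,2),(0,1),(2,0),(2,1),(2,2),(3,2),(3,0)]),
    ((3,1),(3,2),[(3,1),(1,2),(1,0),(1,1),(2,1),(2,2),(2,0),(0,1),(0,0),(0,2),(3,0),(3,2)]),
    ((3,2),(0,0),[(3,2),(2,2),(2,0),(2,1),(1,1),(1,0),(1,2),(3,1),(3,0),(0,2),(0,1),(0,0)]),
    ((3,2),(0,1),[(3,2),(2,2),(2,0),(2,1),(1,1),(1,0),(1,2),(3,1),(3,0),(0,2),(0,0),(0,1)]),
    ((3,2),(0,2),[(3,2),(2,2),(2,1),(2,0),(0,1),(0,0),(1,0),(1,1),(1,2),(3,1),(3,0),(0,2)]),
    ((3,2),(1,0),[(3,2),(2,2),(2,0),(2,1),(1,1),(1,2),(3,1),(3,0),(0,2),(0,1),(0,0),(1,0)]),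
    ((3,2),(1,1),[(3,2),(2,2),(2,1),(2,0),(0,1),(0,0),(0,2),(3,0),(3,1),(1,2),(1,0),(1,1)]),
    ((3,2),(1,2),[(3,2),(2,2),(2,0),(2,1),(1,1),(1,0),(0,0),(0,1),(0,2),(3,0),(3,1),(1,2)]),
    ((3,2),(2,0),[(3,2),(2,2),(2,1),(1,1),(1,0),(1,2),(3,1),(3,0),(0,2),(0,0),(0,1),(2,0)]),
    ((3,2),(2,1),[(3,2),(2,2),(2,0),(0,1),(0,0),(0,2),(3,0),(3,1),(1,2),(1,0),(1,1),(2,1)]),
    ((3,2),(2,2),[(3,2),(3,0),(3,1),(1,2),(1,1),(1,0),(0,0),(0,2),(0,1),(2,0),(2,1),(2,2)]),
    ((3,2),(3,0),[(3,2),(2,2),(2,1),(2,0),(0,1),(0,2),(0,0),(1,0),(1,1),(1,2),(3,1),(3,0)]),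
    ((3,2),(3,1),[(3,2),(2,2),(2,0),(2,1),(1,1),(1,2),(1,0),(0,0),(0,1),(0,2),(3,0),(3,1)])]"

lemma ptab_ok: "list_all (\<lambda>(x,y,p). okp x y p) ptab"
  by code_simp

lemma ptab_cover: "list_all (\<lambda>x. list_all (\<lambda>y. x = y \<or> (x,y) \<in> set (map (\<lambda>(x,y,p). (x,y)) ptab)) dlist) dlist"
  by code_simp


lemma okp_ham:
  assumes "okp x y p" shows "ham_path (dverts 3) (DCell1 3) x y p"
proof -
  have sp: "set p = dverts 3" using assms unfolding okp_def list_all_iff set_dlist[symmetric] by auto
  have "chain dc3 p" using assms unfolding okp_def by auto
  moreover have "\<And>u v. u \<in> dverts 3 \<Longrightarrow> v \<in> dverts 3 \<Longrightarrow> dc3 u v \<Longrightarrow> DCell1 3 u v"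
    unfolding dc3_def DCell1_def dgraph_def inner_edge_def dcell_link_def dverts_def by auto
  ultimately show ?thesis using assms sp unfolding okp_def ham_path_def
    by (metis chain_nth nth_mem Suc_lessD)
qed

lemma dcell_hc: "hamiltonian_connected (dverts 3) (DCell1 3)"
  unfolding hamiltonian_connected_def
proof (intro ballI impI)
  fix x y assume xy: "x \<in> dverts 3" "y \<in> dverts 3" "x \<noteq> y"
  then have "(x,y) \<in> set (map (\<lambda>(x,y,p). (x,y)) ptab)"
    using ptab_cover unfolding list_all_iff set_dlist by auto
  then obtain p where "(x,y,p) \<in> set ptab" by auto
  then have "okp x y p" using ptab_ok unfolding list_all_iff by auto
  then show "\<exists>p. ham_path (dverts 3) (DCell1 3) x y p" using okp_ham by blast
qed

lemma ham_transfer: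
  assumes inj: "inj_on f V" and im: "f ` V = V"
    and E: "\<And>u v. E u v \<Longrightarrow> E' (f u) (f v)"
    and hc: "hamiltonian_connected V E"
  shows "hamiltonian_connected V E'"
  unfolding hamiltonian_connected_def
proof (intro ballI impI)
  fix x' y' assume xy: "x' \<in> V" "y' \<in> V" "x' \<noteq> y'"
  have "x' \<in> f ` V" using xy(1) im by simp
  then obtain x where x: "x \<in> V" "f x = x'" by (rule imageE) simp
  have "y' \<in> f ` V" using xy(2) im by simp
  then obtain y where y: "y \<in> V" "f y = y'" by (rule imageE) simp
  have "x \<noteq> y" using x(2) y(2) xy(3) by metis
  then obtain p where p: "ham_path V E x y p" using hc x(1) y(1) unfolding hamiltonian_connected_def by metis
  have "ham_path V E' x' y' (map f p)"
    unfolding ham_path_def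
  proof (intro conjI allI impI)
    have p1: "distinct p" "set p = V" "p \<noteq> []" "hd p = x" "last p = y"
      "\<And>i. Suc i < length p \<Longrightarrow> E (p ! i) (p ! Suc i)"
      using p unfolding ham_path_def by auto
    show "distinct (map f p)" using p1(1,2) inj by (simp add: distinct_map)
    show "set (map f p) = V" using p1(2) im by (simp only: set_map)
    show "map f p \<noteq> []" using p1(3) by simp
    show "hd (map f p) = x'" using p1(3,4) x(2) by (simp add: hd_map)
    show "last (map f p) = y'" using p1(3,5) y(2) by (simp add: last_map)
    fix i assume i: "Suc i < length (map f p)"
    then have "E (p ! i) (p ! Suc i)" using p1(6) by simp
    then have "E' (f (p ! i)) (f (p ! Suc i))" by (rule E)
    then show "E' (map f p ! i) (map f p ! Suc i)" using i by simp
  qed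
  then show "\<exists>p. ham_path V E' x' y' p" by blast
qed

lemma gl_sym: "gen_links n M \<Longrightarrow> M u v \<Longrightarrow> M v u"
  unfolding gen_links_def by (elim conjE) (erule allE, erule allE, erule mp)
lemma gl_in: "gen_links n M \<Longrightarrow> M u v \<Longrightarrow> u \<in> dverts n \<and> v \<in> dverts n \<and> fst u \<noteq> fst v"
  unfolding gen_links_def by (elim conjE) (erule allE, erule allE, erule mp)
lemma gl_pair: "gen_links n M \<Longrightarrow> a \<le> n \<Longrightarrow> b \<le> n \<Longrightarrow> a \<noteq> b \<Longrightarrow>
   \<exists>!e. M (fst e) (snd e) \<and> fst (fst e) = a \<and> fst (snd e) = b"
  unfolding gen_links_def by (elim conjE) (erule allE[of _ a], erule allE[of _ b], simp)
lemma gl_uniq: "gen_links n M \<Longrightarrow> u \<in> dverts n \<Longrightarrow> \<exists>!v. M u v"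
  unfolding gen_links_def by (elim conjE) (erule bspec)

definition gsel :: "(vert \<Rightarrow> vert \<Rightarrow> bool) \<Rightarrow> nat \<Rightarrow> nat \<Rightarrow> nat" where
  "gsel M a b = (THE j. j < 3 \<and> (\<exists>v. M (a,j) v \<and> fst v = b))"

lemma gsel_unique:
  assumes G: "gen_links 3 M" and ab: "a \<le> 3" "b \<le> 3" "a \<noteq> b"
  shows "\<exists>!j. j < 3 \<and> (\<exists>v. M (a,j) v \<and> fst v = b)"
proof -
  from gl_pair[OF G ab] obtain e where e: "M (fst e) (snd e)" "fst (fst e) = a" "fst (snd e) = b"
    and eu: "\<And>e'. M (fst e') (snd e') \<and> fst (fst e') = a \<and> fst (snd e') = b \<Longrightarrow> e' = e"
    by (elim ex1E) blast
  have "fst e \<in> dverts 3" using gl_in[OF G e(1)] by simp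
  then have "snd (fst e) < 3" unfolding dverts_def by (auto simp: mem_Times_iff)
  moreover have "M (a, snd (fst e)) (snd e)" using e(1,2) by (metis prod.collapse)
  ultimately have ex: "snd (fst e) < 3 \<and> (\<exists>v. M (a, snd (fst e)) v \<and> fst v = b)"
    using e(3) by blast
  show ?thesis
  proof (rule ex1I[where a="snd (fst e)" and P="\<lambda>j. j < 3 \<and> (\<exists>v. M (a,j) v \<and> fst v = b)", OF ex])
    fix j assume "j < 3 \<and> (\<exists>v. M (a,j) v \<and> fst v = b)"
    then obtain v where v: "M (a,j) v" "fst v = b" by blast
    have "((a,j),v) = e" using eu[of "((a,j),v)"] v by simp
    then show "j = snd (fst e)" by auto
  qed
qed

lemma gsel_props:
  assumes G: "gen_links 3 M" and ab: "a \<le> 3" "b \<le> 3" "a \<noteq> b"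
  shows "gsel M a b < 3" "\<exists>v. M (a, gsel M a b) v \<and> fst v = b"
  using theI'[OF gsel_unique[OF assms]] unfolding gsel_def by auto

lemma gsel_inj:
  assumes G: "gen_links 3 M" and ab: "a \<le> 3" "b \<le> 3" "a \<noteq> b" "b' \<le> 3" "a \<noteq> b'"
    and eq: "gsel M a b = gsel M a b'"
  shows "b = b'"
proof -
  obtain v where v: "M (a, gsel M a b) v" "fst v = b" using gsel_props[OF G ab(1-3)] by blast
  obtain v' where v': "M (a, gsel M a b') v'" "fst v' = b'" using gsel_props[OF G ab(1) ab(4,5)] by blast
  have "(a, gsel M a b) \<in> dverts 3" using gsel_props[OF G ab(1-3)] ab unfolding dverts_def by auto
  then have "\<exists>!w. M (a, gsel M a b) w" using gl_uniq[OF G] by blast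
  then have "v = v'" using v v' eq by metis
  then show ?thesis using v v' by simp
qed

lemma gsel_link:
  assumes G: "gen_links 3 M" and ab: "a \<le> 3" "b \<le> 3" "a \<noteq> b"
  shows "M (a, gsel M a b) (b, gsel M b a)"
proof -
  obtain w where w: "M (a, gsel M a b) w" "fst w = b" using gsel_props[OF G ab] by blast
  obtain w' where w': "M (b, gsel M b a) w'" "fst w' = a" using gsel_props[OF G ab(2,1)] ab(3) by metis
  have sym: "M w' (b, gsel M b a)" using gl_sym[OF G w'(1)] .
  from gl_pair[OF G ab] obtain e where
    eu: "\<And>e'. M (fst e') (snd e') \<and> fst (fst e') = a \<and> fst (snd e') = b \<Longrightarrow> e' = e"
    by (elim ex1E) blast
  have "((a, gsel M a b), w) = (w', (b, gsel M b a))"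
    using eu[of "((a, gsel M a b), w)"] eu[of "(w', (b, gsel M b a))"] w w' sym by simp
  then show ?thesis using w by simp
qed

definition cpart :: "nat \<Rightarrow> nat \<Rightarrow> nat" where
  "cpart a i = (if i < a then i else Suc i)"

definition fmap :: "(vert \<Rightarrow> vert \<Rightarrow> bool) \<Rightarrow> vert \<Rightarrow> vert" where
  "fmap M u = (fst u, gsel M (fst u) (cpart (fst u) (snd u)))"

lemma gen_hc:
  assumes G: "gen_links 3 M"
  shows "hamiltonian_connected (dverts 3) (GenDCell1 3 M)"
proof (rule ham_transfer[OF _ _ _ dcell_hc])
  have cp: "\<And>a i. (a,i) \<in> dverts 3 \<Longrightarrow> cpart a i \<le> 3 \<and> cpart a i \<noteq> a"
    unfolding cpart_def dverts_def by auto
  have fin: "\<And>u. u \<in> dverts 3 \<Longrightarrow> fmap M u \<in> dverts 3"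
  proof -
    fix u assume u: "u \<in> dverts 3"
    obtain a i where ai: "u = (a,i)" by (cases u)
    have "a \<le> 3" using u ai unfolding dverts_def by auto
    then show "fmap M u \<in> dverts 3" using gsel_props(1)[OF G, of a "cpart a i"] cp[of a i] u ai
      unfolding fmap_def dverts_def by auto
  qed
  show inj: "inj_on (fmap M) (dverts 3)"
  proof (rule inj_onI)
    fix u v assume u: "u \<in> dverts 3" and v: "v \<in> dverts 3" and eq: "fmap M u = fmap M v"
    obtain a i where ai: "u = (a,i)" by (cases u)
    obtain b j where bj: "v = (b,j)" by (cases v)
    have ab: "a = b" using eq ai bj unfolding fmap_def by simp
    have a3: "a \<le> 3" using u ai unfolding dverts_def by auto
    have "gsel M a (cpart a i) = gsel M a (cpart a j)" using eq ai bj ab unfolding fmap_def by simp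
    then have "cpart a i = cpart a j"
      using gsel_inj[OF G a3] cp[of a i] cp[of a j] u v ai bj ab by metis
    then have "i = j" unfolding cpart_def by (auto split: if_splits)
    then show "u = v" using ai bj ab by simp
  qed
  show "fmap M ` dverts 3 = dverts 3"
  proof (rule endo_inj_surj)
    show "finite (dverts 3)" unfolding dverts_def by simp
    show "fmap M ` dverts 3 \<subseteq> dverts 3" using fin by blast
  qed (rule inj)
  fix u v assume e: "DCell1 3 u v"
  then have uv: "u \<in> dverts 3" "v \<in> dverts 3" unfolding DCell1_def dgraph_def by auto
  obtain a i where ai: "u = (a,i)" by (cases u)
  obtain b j where bj: "v = (b,j)" by (cases v)
  have a3: "a \<le> 3" "b \<le> 3" "i < 3" "j < 3" using uv ai bj unfolding dverts_def by auto
  show "GenDCell1 3 M (fmap M u) (fmap M v)"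
    unfolding GenDCell1_def dgraph_def
  proof (intro conjI)
    show "fmap M u \<in> dverts 3" "fmap M v \<in> dverts 3" using fin uv by auto
    show "inner_edge (fmap M u) (fmap M v) \<or> M (fmap M u) (fmap M v)"
    proof (cases "inner_edge u v")
      case True
      then have "u \<noteq> v" "fst u = fst v" unfolding inner_edge_def by auto
      then have "fmap M u \<noteq> fmap M v" using inj uv by (meson inj_on_contraD)
      then show ?thesis using \<open>fst u = fst v\<close> unfolding inner_edge_def fmap_def
        by (auto simp: prod_eq_iff)
    next
      case False
      then have "dcell_link 3 u v" using e unfolding DCell1_def dgraph_def by auto
      then have "(a < b \<and> i = b - 1 \<and> j = a) \<or> (b < a \<and> j = a - 1 \<and> i = b)"
        unfolding dcell_link_def ai bj by auto
      then have "cpart a i = b \<and> cpart b j = a \<and> a \<noteq> b" unfolding cpart_def by auto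
      then show ?thesis using gsel_link[OF G a3(1,2)] ai bj unfolding fmap_def by auto
    qed
  qed
qed

theorem lemma4:
  shows "hamiltonian_connected (dverts 3) (DCell1 3) \<and>
         (\<forall>M. gen_links 3 M \<longrightarrow> hamiltonian_connected (dverts 3) (GenDCell1 3 M))"
  using dcell_hc gen_hc by blast

end
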